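(* Let $G$ be a connected graph with $n$ vertices and $m$ edges. If $m\ge 2n^{3/2}$, then $\frac{q(G)}{R(G)}<\frac{n}{\sqrt{n-1}}$.
   Context: All graphs are finite and simple. For a vertex $u$, $d(u)$ is its degree. The Randić index is $R(G)=\sum_{\{u,v\}\in E(G)} \frac{1}{\sqrt{d(u)d(v)}}$. The signless Laplacian is $Q=D+A$ ($D$ the diagonal degree matrix, $A$ the adjacency matrix), and $q(G)$ is its largest eigenvalue. *)

theory Defs
  imports "HOL-Analysis.Analysis"
begin

definition simple_graph :: "'a set \<Rightarrow> 'a set set \<Rightarrow> bool" where
  "simple_graph V E \<longleftrightarrow> finite V \<and> (\<forall>e\<in>E. \<exists>u v. u \<in> V \<and> v \<in> V \<and> u \<noteq> v \<and> e = {u, v})"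

definition adj :: "'a set set \<Rightarrow> 'a \<Rightarrow> 'a \<Rightarrow> bool" where
  "adj E u v \<longleftrightarrow> {u, v} \<in> E"

definition connected_graph :: "'a set \<Rightarrow> 'a set set \<Rightarrow> bool" where
  "connected_graph V E \<longleftrightarrow> V \<noteq> {} \<and>
     (\<forall>u\<in>V. \<forall>v\<in>V. (u, v) \<in> {(x, y). adj E x y}\<^sup>*)"

definition degree :: "'a set \<Rightarrow> 'a set set \<Rightarrow> 'a \<Rightarrow> nat" where
  "degree V E u = card {v \<in> V. adj E u v}"

definition randic :: "'a set \<Rightarrow> 'a set set \<Rightarrow> real" where
  "randic V E = (\<Sum>e\<in>E. (THE r. \<exists>u v. e = {u, v} \<and> u \<noteq> v \<and>
        r = 1 / sqrt (real (degree V E u) * real (degree V E v))))"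

definition signless_laplacian :: "'a set \<Rightarrow> 'a set set \<Rightarrow> 'a \<Rightarrow> 'a \<Rightarrow> real" where
  "signless_laplacian V E u w =
     (if u = w then real (degree V E u) else 0) + (if adj E u w then 1 else 0)"

definition is_Q_eigenvalue :: "'a set \<Rightarrow> 'a set set \<Rightarrow> real \<Rightarrow> bool" where
  "is_Q_eigenvalue V E lam \<longleftrightarrow> (\<exists>x :: 'a \<Rightarrow> real. (\<exists>v\<in>V. x v \<noteq> 0) \<and>
     (\<forall>u\<in>V. (\<Sum>w\<in>V. signless_laplacian V E u w * x w) = lam * x u))"

text \<open>q(G): the largest eigenvalue of Q (Q is real symmetric, so all eigenvalues are real).\<close>
definition q_index :: "'a set \<Rightarrow> 'a set set \<Rightarrow> real" where
  "q_index V E = Max {lam. is_Q_eigenvalue V E lam}"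

end

theory Submission imports Defs "Jordan_Normal_Form.Spectral_Radius" begin

lemma real_eig:
  fixes M :: "'a \<Rightarrow> 'a \<Rightarrow> real" and z :: "'a \<Rightarrow> complex"
  assumes fin: "finite V" and sym: "\<forall>u\<in>V. \<forall>b\<in>V. M u b = M b u"
    and nz: "\<exists>v\<in>V. z v \<noteq> 0"
    and eq: "\<forall>u\<in>V. (\<Sum>b\<in>V. complex_of_real (M u b) * z b) = k * z u"
  shows "\<exists>lam x. (\<exists>v\<in>V. x v \<noteq> (0::real)) \<and> (\<forall>u\<in>V. (\<Sum>b\<in>V. M u b * x b) = lam * x u)"
proof -
  define s where "s = (\<Sum>u\<in>V. cnj (z u) * (\<Sum>b\<in>V. complex_of_real (M u b) * z b))"
  define N where "N = (\<Sum>u\<in>V. (cmod (z u))^2)"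
  obtain v where v: "v \<in> V" "z v \<noteq> 0" using nz by blast
  have "N \<ge> (cmod (z v))^2" unfolding N_def
    by (rule member_le_sum[OF v(1)]) (auto simp: fin)
  moreover have "(cmod (z v))^2 > 0" using v by simp
  ultimately have Npos: "N > 0" by linarith
  have s1: "s = k * complex_of_real N"
  proof -
    have "s = (\<Sum>u\<in>V. k * (cnj (z u) * z u))" unfolding s_def
      by (rule sum.cong, simp, subst eq[rule_format], auto)
    also have "\<dots> = k * (\<Sum>u\<in>V. cnj (z u) * z u)" by (simp add: sum_distrib_left)
    also have "(\<Sum>u\<in>V. cnj (z u) * z u) = complex_of_real N" unfolding N_def of_real_sum
      by (rule sum.cong, simp, subst complex_norm_square, simp add: mult.commute)
    finally show ?thesis .
  qed
  have s2: "s = (\<Sum>u\<in>V. \<Sum>b\<in>V. complex_of_real (M u b) * (cnj (z u) * z b))"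
    unfolding s_def by (simp add: sum_distrib_left algebra_simps)
  have "cnj s = (\<Sum>u\<in>V. \<Sum>b\<in>V. complex_of_real (M u b) * (z u * cnj (z b)))"
    unfolding s2 by simp
  also have "\<dots> = (\<Sum>b\<in>V. \<Sum>u\<in>V. complex_of_real (M u b) * (z u * cnj (z b)))"
    by (rule sum.swap)
  also have "\<dots> = s" unfolding s2
    by (rule sum.cong, simp, rule sum.cong, simp, simp add: sym mult.commute)
  finally have "Im (cnj s) = Im s" by simp
  hence "Im s = 0" by simp
  hence "Im k = 0" using s1 Npos by simp
  define lam where "lam = Re k"
  have k: "k = complex_of_real lam" unfolding lam_def using \<open>Im k = 0\<close> by (simp add: complex_eq_iff)
  have re: "\<forall>u\<in>V. (\<Sum>b\<in>V. M u b * Re (z b)) = lam * Re (z u)"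
  proof
    fix u assume "u \<in> V"
    then have h: "(\<Sum>b\<in>V. complex_of_real (M u b) * z b) = k * z u" using eq by blast
    have h1: "Re (\<Sum>b\<in>V. complex_of_real (M u b) * z b) = Re (k * z u)" using h by (rule arg_cong)
    have h2: "Re (\<Sum>b\<in>V. complex_of_real (M u b) * z b) = (\<Sum>b\<in>V. M u b * Re (z b))" by simp
    have h3: "Re (k * z u) = lam * Re (z u)" unfolding k by simp
    show "(\<Sum>b\<in>V. M u b * Re (z b)) = lam * Re (z u)" using h1 h2 h3 by simp
  qed
  have im: "\<forall>u\<in>V. (\<Sum>b\<in>V. M u b * Im (z b)) = lam * Im (z u)"
  proof
    fix u assume "u \<in> V"
    then have h: "(\<Sum>b\<in>V. complex_of_real (M u b) * z b) = k * z u" using eq by blast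
    have h1: "Im (\<Sum>b\<in>V. complex_of_real (M u b) * z b) = Im (k * z u)" using h by (rule arg_cong)
    have h2: "Im (\<Sum>b\<in>V. complex_of_real (M u b) * z b) = (\<Sum>b\<in>V. M u b * Im (z b))" by simp
    have h3: "Im (k * z u) = lam * Im (z u)" unfolding k by simp
    show "(\<Sum>b\<in>V. M u b * Im (z b)) = lam * Im (z u)" using h1 h2 h3 by simp
  qed
  show ?thesis
  proof (cases "Re (z v) = 0")
    case True
    then have "Im (z v) \<noteq> 0" using v complex_eq_iff by force
    then show ?thesis using im v(1) by (intro exI[of _ lam] exI[of _ "\<lambda>b. Im (z b)"]) blast
  next
    case False
    then show ?thesis using re v(1) by (intro exI[of _ lam] exI[of _ "\<lambda>b. Re (z b)"]) blast
  qed
qed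


lemma Q_sym: "signless_laplacian V E u b = signless_laplacian V E b u"
  unfolding signless_laplacian_def adj_def by (auto simp: insert_commute)

lemma spec_fin_ne:
  fixes V :: "'a set" and E :: "'a set set"
  assumes fin: "finite V" and ne: "V \<noteq> {}"
  shows "finite {lam. is_Q_eigenvalue V E lam} \<and> {lam. is_Q_eigenvalue V E lam} \<noteq> {}"
proof -
  define n where "n = card V"
  obtain f where bij: "bij_betw f {0..<n} V" using ex_bij_betw_nat_finite[OF fin] n_def by blast
  define g where "g = the_inv_into {0..<n} f"
  have inj: "inj_on f {0..<n}" and img: "f ` {0..<n} = V" using bij by (auto simp: bij_betw_def)
  have gf: "\<And>i. i < n \<Longrightarrow> g (f i) = i" unfolding g_def using inj by (simp add: the_inv_into_f_f)
  have fg: "\<And>b. b \<in> V \<Longrightarrow> f (g b) = b" unfolding g_def using bij by (simp add: f_the_inv_into_f_bij_betw)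
  have gV: "\<And>b. b \<in> V \<Longrightarrow> g b < n" unfolding g_def using bij
    by (metis atLeastLessThan_iff bij_betw_def the_inv_into_into order_refl)
  have fV: "\<And>i. i < n \<Longrightarrow> f i \<in> V" using img by auto
  have npos: "n > 0" using fin ne n_def by (simp add: card_gt_0_iff)
  define A :: "complex mat" where
    "A = mat n n (\<lambda>(i,j). complex_of_real (signless_laplacian V E (f i) (f j)))"
  have A: "A \<in> carrier_mat n n" unfolding A_def by simp
  have key: "vec_index (A *\<^sub>v w) i = (\<Sum>b\<in>V. complex_of_real (signless_laplacian V E (f i) b) * vec_index w (g b))"
    if w: "w \<in> carrier_vec n" and i: "i < n" for w i
  proof -
    have "vec_index (A *\<^sub>v w) i = (\<Sum>j\<in>{0..<n}. complex_of_real (signless_laplacian V E (f i) (f j)) * vec_index w j)"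
      using w i A unfolding A_def by (simp add: scalar_prod_def)
    also have "\<dots> = (\<Sum>j\<in>{0..<n}. complex_of_real (signless_laplacian V E (f i) (f j)) * vec_index w (g (f j)))"
      by (rule sum.cong) (auto simp: gf)
    also have "\<dots> = (\<Sum>b\<in>f ` {0..<n}. complex_of_real (signless_laplacian V E (f i) b) * vec_index w (g b))"
      by (subst sum.reindex[OF inj]) (simp add: o_def)
    finally show ?thesis using img by simp
  qed
  have sub: "{lam. is_Q_eigenvalue V E lam} \<subseteq> Re ` spectrum A"
  proof
    fix lam assume "lam \<in> {lam. is_Q_eigenvalue V E lam}"
    then obtain x where x0: "\<exists>v\<in>V. x v \<noteq> 0"
      and xe: "\<forall>u\<in>V. (\<Sum>w\<in>V. signless_laplacian V E u w * x w) = lam * x u"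
      unfolding is_Q_eigenvalue_def by auto
    define w where "w = vec n (\<lambda>i. complex_of_real (x (f i)))"
    have wc: "w \<in> carrier_vec n" unfolding w_def by simp
    obtain v where v: "v \<in> V" "x v \<noteq> 0" using x0 by blast
    have "vec_index w (g v) \<noteq> 0" unfolding w_def using v gV fg by simp
    hence wnz: "w \<noteq> 0\<^sub>v n" using gV[OF v(1)] by auto
    have "A *\<^sub>v w = complex_of_real lam \<cdot>\<^sub>v w"
    proof (rule eq_vecI)
      show "dim_vec (A *\<^sub>v w) = dim_vec (complex_of_real lam \<cdot>\<^sub>v w)" using A wc by simp
      fix i assume "i < dim_vec (complex_of_real lam \<cdot>\<^sub>v w)"
      hence i: "i < n" using wc by simp
      have "vec_index (A *\<^sub>v w) i = (\<Sum>b\<in>V. complex_of_real (signless_laplacian V E (f i) b) * vec_index w (g b))"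
        by (rule key[OF wc i])
      also have "\<dots> = (\<Sum>b\<in>V. complex_of_real (signless_laplacian V E (f i) b * x b))"
        by (rule sum.cong) (auto simp: w_def gV fg)
      also have "\<dots> = complex_of_real (lam * x (f i))"
        unfolding of_real_sum[symmetric] using xe fV[OF i] by simp
      also have "\<dots> = vec_index (complex_of_real lam \<cdot>\<^sub>v w) i" using i wc by (simp add: w_def)
      finally show "vec_index (A *\<^sub>v w) i = vec_index (complex_of_real lam \<cdot>\<^sub>v w) i" .
    qed
    hence "eigenvalue A (complex_of_real lam)" unfolding eigenvalue_def eigenvector_def
      using A wc wnz by auto
    hence "complex_of_real lam \<in> spectrum A" unfolding spectrum_def by simp
    thus "lam \<in> Re ` spectrum A" by force
  qed
  have finS: "finite {lam. is_Q_eigenvalue V E lam}"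
    using finite_subset[OF sub] card_finite_spectrum(1)[OF A] by blast
  obtain k where "k \<in> spectrum A" using spectrum_non_empty[OF A npos] by blast
  then obtain w where wc: "w \<in> carrier_vec n" and wnz: "w \<noteq> 0\<^sub>v n" and Aw: "A *\<^sub>v w = k \<cdot>\<^sub>v w"
    unfolding spectrum_def eigenvalue_def eigenvector_def using A by auto
  define z where "z b = vec_index w (g b)" for b
  have "\<exists>i<n. vec_index w i \<noteq> 0"
  proof (rule ccontr)
    assume "\<not> ?thesis"
    hence "w = 0\<^sub>v n" using wc by (intro eq_vecI) auto
    thus False using wnz by simp
  qed
  then obtain i where i: "i < n" "vec_index w i \<noteq> 0" by blast
  have "z (f i) \<noteq> 0" unfolding z_def using gf i by simp
  hence znz: "\<exists>v\<in>V. z v \<noteq> 0" using fV i by blast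
  have zeq: "\<forall>u\<in>V. (\<Sum>b\<in>V. complex_of_real (signless_laplacian V E u b) * z b) = k * z u"
  proof
    fix u assume u: "u \<in> V"
    have "vec_index (A *\<^sub>v w) (g u) = vec_index (k \<cdot>\<^sub>v w) (g u)" using Aw by simp
    thus "(\<Sum>b\<in>V. complex_of_real (signless_laplacian V E u b) * z b) = k * z u"
      using key[OF wc gV[OF u]] fg[OF u] gV[OF u] wc unfolding z_def by simp
  qed
  have symQ: "\<forall>u\<in>V. \<forall>b\<in>V. signless_laplacian V E u b = signless_laplacian V E b u"
    by (intro ballI) (rule Q_sym)
  from real_eig[OF fin symQ znz zeq] obtain lam x where "\<exists>v\<in>V. x v \<noteq> (0::real)"
      "\<forall>u\<in>V. (\<Sum>b\<in>V. signless_laplacian V E u b * x b) = lam * x u"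
    by blast
  hence "is_Q_eigenvalue V E lam" unfolding is_Q_eigenvalue_def by blast
  thus ?thesis using finS by blast
qed


lemma deg_le:
  assumes sg: "simple_graph V E" and u: "u \<in> V"
  shows "degree V E u \<le> card V - 1"
proof -
  have fin: "finite V" using sg unfolding simple_graph_def by simp
  have "\<not> adj E u u"
  proof
    assume "adj E u u"
    hence "{u} \<in> E" unfolding adj_def by simp
    then obtain a b where ab: "a \<noteq> b" "{u} = {a, b}" using sg unfolding simple_graph_def by blast
    hence "a \<in> {u}" "b \<in> {u}" by auto
    thus False using ab(1) by simp
  qed
  hence "{v \<in> V. adj E u v} \<subseteq> V - {u}" by auto
  hence "card {v \<in> V. adj E u v} \<le> card (V - {u})" using fin by (intro card_mono) auto
  thus ?thesis unfolding degree_def using u fin by simp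
qed

lemma deg_le_real:
  assumes sg: "simple_graph V E" and u: "u \<in> V"
  shows "real (degree V E u) \<le> real (card V) - 1"
proof -
  have fin: "finite V" using sg unfolding simple_graph_def by simp
  have c1: "card V \<ge> 1" using fin u by (metis One_nat_def Suc_leI card_gt_0_iff empty_iff)
  have "real (degree V E u) \<le> real (card V - 1)" using deg_le[OF sg u] by (simp only: of_nat_le_iff)
  also have "real (card V - 1) = real (card V) - 1" using c1 by (simp add: of_nat_diff)
  finally show ?thesis .
qed

lemma eig_bound:
  assumes sg: "simple_graph V E" and ev: "is_Q_eigenvalue V E lam"
  shows "lam \<le> 2 * (real (card V) - 1)"
proof -
  have fin: "finite V" using sg unfolding simple_graph_def by simp
  obtain x where x0: "\<exists>v\<in>V. x v \<noteq> 0"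
    and xe: "\<forall>u\<in>V. (\<Sum>w\<in>V. signless_laplacian V E u w * x w) = lam * x u"
    using ev unfolding is_Q_eigenvalue_def by auto
  obtain v where v: "v \<in> V" "x v \<noteq> 0" using x0 by blast
  define M where "M = Max ((\<lambda>w. \<bar>x w\<bar>) ` V)"
  have Mge: "\<And>w. w \<in> V \<Longrightarrow> \<bar>x w\<bar> \<le> M" unfolding M_def using fin by auto
  obtain u where u: "u \<in> V" "\<bar>x u\<bar> = M" unfolding M_def using fin v(1)
    by (metis (no_types, lifting) Max_in empty_iff finite_imageI image_iff image_is_empty)
  have Mpos: "M > 0" using Mge[OF v(1)] v(2) by linarith
  define d where "d = real (degree V E u)"
  have split: "(\<Sum>w\<in>V. signless_laplacian V E u w * x w)
      = d * x u + (\<Sum>w\<in>V. (if adj E u w then x w else 0))"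
  proof -
    have "(\<Sum>w\<in>V. signless_laplacian V E u w * x w)
        = (\<Sum>w\<in>V. (if u = w then d * x w else 0)) + (\<Sum>w\<in>V. (if adj E u w then x w else 0))"
      unfolding signless_laplacian_def d_def sum.distrib[symmetric]
      by (rule sum.cong) (auto simp: algebra_simps)
    also have "(\<Sum>w\<in>V. (if u = w then d * x w else 0)) = d * x u" using u fin by simp
    finally show ?thesis .
  qed
  have "\<bar>\<Sum>w\<in>V. (if adj E u w then x w else 0)\<bar> \<le> (\<Sum>w\<in>V. \<bar>if adj E u w then x w else 0\<bar>)"
    by (rule sum_abs)
  also have "\<dots> \<le> (\<Sum>w\<in>V. (if adj E u w then M else 0))"
    by (rule sum_mono) (auto simp: Mge)
  also have "\<dots> = M * d"
    unfolding d_def degree_def using fin by (simp add: sum.If_cases Int_def)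
  finally have b1: "\<bar>\<Sum>w\<in>V. (if adj E u w then x w else 0)\<bar> \<le> M * d" .
  have "\<bar>lam\<bar> * M = \<bar>lam * x u\<bar>" using u by (simp add: abs_mult)
  also have "\<dots> = \<bar>d * x u + (\<Sum>w\<in>V. (if adj E u w then x w else 0))\<bar>" using xe u split by simp
  also have "\<dots> \<le> d * M + M * d"
  proof -
    have dnn: "d \<ge> 0" unfolding d_def by simp
    have "\<bar>d * x u\<bar> = d * M" using u(2) dnn by (simp add: abs_mult)
    thus ?thesis using b1 abs_triangle_ineq[of "d * x u" "\<Sum>w\<in>V. (if adj E u w then x w else 0)"] by linarith
  qed
  finally have "\<bar>lam\<bar> * M \<le> (2 * d) * M" by (simp add: algebra_simps)
  hence l1: "\<bar>lam\<bar> \<le> 2 * d" using Mpos by simp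
  have l2: "d \<le> real (card V) - 1" unfolding d_def by (rule deg_le_real[OF sg u(1)])
  have l3: "2 * d \<le> 2 * (real (card V) - 1)" using l2 by simp
  have l4: "lam \<le> \<bar>lam\<bar>" by simp
  show ?thesis using order_trans[OF l4 order_trans[OF l1 l3]] .

qed


lemma randic_term:
  assumes sg: "simple_graph V E" and e: "e \<in> E"
  shows "(THE r. \<exists>u v. e = {u, v} \<and> u \<noteq> v \<and>
        r = 1 / sqrt (real (degree V E u) * real (degree V E v))) \<ge> 1 / (real (card V) - 1)"
proof -
  have fin: "finite V" using sg unfolding simple_graph_def by simp
  obtain u v where uv: "u \<in> V" "v \<in> V" "u \<noteq> v" "e = {u, v}" using sg e unfolding simple_graph_def by blast
  let ?f = "\<lambda>a b. 1 / sqrt (real (degree V E a) * real (degree V E b))"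
  have the: "(THE r. \<exists>a b. e = {a, b} \<and> a \<noteq> b \<and> r = ?f a b) = ?f u v"
  proof (rule the_equality)
    show "\<exists>a b. e = {a, b} \<and> a \<noteq> b \<and> ?f u v = ?f a b" using uv by blast
    fix r assume "\<exists>a b. e = {a, b} \<and> a \<noteq> b \<and> r = ?f a b"
    then obtain a b where ab: "e = {a, b}" "r = ?f a b" by blast
    hence "(a = u \<and> b = v) \<or> (a = v \<and> b = u)" using uv(4) by (metis doubleton_eq_iff)
    thus "r = ?f u v" using ab(2) by (auto simp: mult.commute)
  qed
  have du: "degree V E u \<ge> 1"
  proof -
    have "v \<in> {w \<in> V. adj E u w}" using uv e unfolding adj_def by auto
    hence "card {w \<in> V. adj E u w} > 0" using fin by (auto simp: card_gt_0_iff)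
    thus ?thesis unfolding degree_def by simp
  qed
  have dv: "degree V E v \<ge> 1"
  proof -
    have "u \<in> {w \<in> V. adj E v w}" using uv e unfolding adj_def by (auto simp: insert_commute)
    hence "card {w \<in> V. adj E v w} > 0" using fin by (auto simp: card_gt_0_iff)
    thus ?thesis unfolding degree_def by simp
  qed
  have cV: "card V \<ge> 2"
  proof -
    have "{u, v} \<subseteq> V" using uv by auto
    hence "card {u, v} \<le> card V" using fin by (intro card_mono) auto
    thus ?thesis using uv(3) by simp
  qed
  define N where "N = real (card V) - 1"
  have Npos: "N \<ge> 1" unfolding N_def using cV by simp
  have du': "real (degree V E u) \<le> N" "real (degree V E v) \<le> N"
    unfolding N_def by (rule deg_le_real[OF sg uv(1)], rule deg_le_real[OF sg uv(2)])
  have pp: "real (degree V E u) * real (degree V E v) \<le> N * N"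
    using du' du dv by (intro mult_mono) auto
  have pos: "real (degree V E u) * real (degree V E v) > 0" using du dv by simp
  have "sqrt (real (degree V E u) * real (degree V E v)) \<le> sqrt (N * N)"
    using pp by (rule real_sqrt_le_mono)
  also have "sqrt (N * N) = N" using Npos by simp
  finally have "sqrt (real (degree V E u) * real (degree V E v)) \<le> N" .
  hence "1 / N \<le> ?f u v" using pos Npos by (intro divide_left_mono) auto
  thus ?thesis using the N_def by simp
qed

theorem lemma3p3:
  fixes V :: "'a set" and E :: "'a set set"
  assumes "simple_graph V E"
    and "connected_graph V E"
    and "real (card E) \<ge> 2 * real (card V) powr (3/2)"
  shows "q_index V E / randic V E < real (card V) / sqrt (real (card V) - 1)"
proof -
  have sg: "simple_graph V E" by fact
  have fin: "finite V" using sg unfolding simple_graph_def by simp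
  have ne: "V \<noteq> {}" using assms(2) unfolding connected_graph_def by simp
  define n where "n = real (card V)"
  define m where "m = real (card E)"
  have n1: "n \<ge> 1" unfolding n_def using fin ne by (simp add: Suc_le_eq card_gt_0_iff)
  have "n powr (3/2) \<ge> 1" using n1 by (simp add: ge_one_powr_ge_zero)
  hence mpos: "m > 0" using assms(3) unfolding m_def n_def by linarith
  hence "E \<noteq> {}" unfolding m_def by auto
  then obtain e where e: "e \<in> E" by blast
  have "\<exists>u v. u \<in> V \<and> v \<in> V \<and> u \<noteq> v \<and> e = {u, v}" using sg e unfolding simple_graph_def by simp
  then obtain u v where uv: "u \<in> V" "v \<in> V" "u \<noteq> v" by blast
  have cV: "card V \<ge> 2"
  proof -
    have "{u, v} \<subseteq> V" using uv by auto
    hence "card {u, v} \<le> card V" using fin by (intro card_mono) auto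
    thus ?thesis using uv(3) by simp
  qed
  hence n2: "n \<ge> 2" unfolding n_def by simp
  have finE: "finite E"
  proof (rule ccontr)
    assume "infinite E" thus False using mpos unfolding m_def by simp
  qed
  have R: "randic V E \<ge> m / (n - 1)"
  proof -
    have "m / (n - 1) = (\<Sum>e\<in>E. 1 / (n - 1))" unfolding m_def by simp
    also have "\<dots> \<le> randic V E" unfolding randic_def n_def
    proof (rule sum_mono)
      fix e assume "e \<in> E"
      from randic_term[OF sg this]
      show "1 / (real (card V) - 1) \<le> (THE r. \<exists>u v. e = {u, v} \<and> u \<noteq> v \<and>
        r = 1 / sqrt (real (degree V E u) * real (degree V E v)))" .
    qed
    finally show ?thesis .
  qed
  have "m / (n - 1) > 0" using mpos n2 by simp
  hence Rpos: "randic V E > 0" using R by linarith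
  obtain S where S: "S = {lam. is_Q_eigenvalue V E lam}" by blast
  have SS: "finite S" "S \<noteq> {}" using spec_fin_ne[OF fin ne] S by auto
  have q: "q_index V E \<le> 2 * (n - 1)"
  proof -
    have "q_index V E \<in> S" unfolding q_index_def S[symmetric] using SS by (rule Max_in)
    thus ?thesis using eig_bound[OF sg] S n_def by auto
  qed
  have "q_index V E / randic V E \<le> 2 * (n - 1) / randic V E"
    using q Rpos by (simp add: divide_right_mono)
  also have "\<dots> \<le> 2 * (n - 1) / (m / (n - 1))"
  proof (rule divide_left_mono)
    show "m / (n - 1) \<le> randic V E" by (rule R)
    show "0 \<le> 2 * (n - 1)" using n2 by simp
    show "0 < randic V E * (m / (n - 1))" using Rpos mpos n2 by simp
  qed
  also have "\<dots> = 2 * (n - 1)^2 / m" using n2 by (simp add: power2_eq_square)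
  also have "\<dots> \<le> 2 * (n - 1)^2 / (2 * n powr (3/2))"
    using assms(3) n2 mpos unfolding m_def n_def[symmetric] by (intro divide_left_mono) auto
  also have "\<dots> < n / sqrt (n - 1)"
  proof -
    have p: "n powr (3/2) = n * sqrt n"
    proof -
      have "n powr (3/2) = n powr (1 + 1/2)" by simp
      also have "\<dots> = n powr 1 * n powr (1/2)" by (rule powr_add)
      finally show ?thesis using n2 by (simp add: powr_half_sqrt)
    qed
    have s1: "sqrt (n - 1) < sqrt n" using n2 by simp
    have s0: "sqrt (n - 1) > 0" using n2 by simp
    have sq: "sqrt (n - 1) * sqrt (n - 1) = n - 1" using n2 by simp
    have a: "(n - 1)^2 * sqrt (n - 1) < n * (n * sqrt n)"
    proof -
      have "(n - 1)^2 < n * n" using n2 by (simp add: power2_eq_square algebra_simps)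
      moreover have "(n-1)^2 > 0" using n2 by simp
      ultimately have "(n - 1)^2 * sqrt (n - 1) < (n * n) * sqrt n" using s1 s0 by (intro mult_strict_mono) auto
      thus ?thesis by (simp add: mult.assoc)
    qed
    have "2 * (n - 1)^2 / (2 * n powr (3/2)) = (n - 1)^2 / (n * sqrt n)" using p by simp
    also have "\<dots> < n / sqrt (n - 1)"
      using a s0 n2 by (simp add: divide_simps)
    finally show ?thesis .
  qed
  finally show ?thesis unfolding n_def .
qed

end
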